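(* Let $1\le K<d$ be integers and $T_\lambda$ as below. There exists $\bar\lambda<1$ such that for all $\lambda\in(\bar\lambda,1)$ the equation $T_\lambda(u)=u$ has a solution in $(1,\infty)$. Letting $u_\lambda$ denote the minimal solution in $[1,\infty)$ for $\lambda\in(\bar\lambda,1)$: (a) $\lim_{\lambda\to1^-}u_\lambda=1$; (b) with $h_\lambda(x)=\frac{u_\lambda-T_\lambda(u_\lambda-x)}{x}$, we have $\lim_{\varepsilon\to0^+}\lim_{\lambda\to1^-}h_\lambda(\varepsilon)=\frac dK$.
   Context: $T_\lambda(u)=\frac{\lambda}{K}\sum_{j=0}^{K-1}(K-j)\binom{d}{j}u^{d-j}(1-u)^j$ for $u\in[0,\infty)$, $\lambda\in(0,1)$. *)

theory Defs
  imports "HOL-Analysis.Analysis"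
begin

definition T :: "nat \<Rightarrow> nat \<Rightarrow> real \<Rightarrow> real \<Rightarrow> real" where
  "T d K l u = l / real K *
     (\<Sum>j<K. real (K - j) * real (d choose j) * u ^ (d - j) * (1 - u) ^ j)"

definition u_min :: "nat \<Rightarrow> nat \<Rightarrow> real \<Rightarrow> real" where
  "u_min d K l = (LEAST u. 1 \<le> u \<and> T d K l u = u)"

definition h :: "nat \<Rightarrow> nat \<Rightarrow> real \<Rightarrow> real \<Rightarrow> real" where
  "h d K l x = (u_min d K l - T d K l (u_min d K l - x)) / x"

end

theory Submission imports Defs begin

lemma T_deriv_gen: assumes "1 \<le> K" shows "(T d K 1 has_real_derivative (1 / real K *
   (\<Sum>j<K. real (K - j) * real (d choose j) *
      (real (d - j) * u ^ (d - j - 1) * (1 - u) ^ j - u ^ (d - j) * (real j * (1 - u) ^ (j - 1)))))) (at u)"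
  unfolding T_def using assms
  by (auto intro!: derivative_eq_intros simp: algebra_simps)

lemma T_deriv1: assumes "1 \<le> K" "K < d"
  shows "(T d K 1 has_real_derivative real d / real K) (at 1)"
proof -
  let ?f = "\<lambda>j. real (K - j) * real (d choose j) *
      (real (d - j) * (1::real) ^ (d - j - 1) * (1 - 1) ^ j - 1 ^ (d - j) * (real j * (1 - 1) ^ (j - 1)))"
  have "(\<Sum>j<K. ?f j) = (\<Sum>j<K. if j = 0 then real K * real d else if j = 1 then - (real K - 1) * real d else 0)"
    using assms by (intro sum.cong) (auto simp: of_nat_diff power_0_left algebra_simps)
  also have "\<dots> = real d"
  proof (cases "K = 1")
    case True then show ?thesis by simp
  next
    case False
    then have "{..<K} = {0,1} \<union> {2..<K}" using assms by auto
    then show ?thesis using False by (simp add: sum.union_disjoint algebra_simps)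
  qed
  finally have "1 / real K * (\<Sum>j<K. ?f j) = real d / real K" by simp
  moreover have "(T d K 1 has_real_derivative 1 / real K * (\<Sum>j<K. ?f j)) (at 1)"
    by (rule T_deriv_gen[OF assms(1)])
  ultimately show ?thesis by (simp only:)
qed

lemma T_scale: "T d K l u = l * T d K 1 u"
  unfolding T_def by simp

lemma T_at1: assumes "1 \<le> K" shows "T d K l 1 = l"
proof -
  have "(\<Sum>j<K. real (K - j) * real (d choose j) * 1 ^ (d - j) * (1 - (1::real)) ^ j)
      = (\<Sum>j<K. if j = 0 then real K else 0)"
    by (rule sum.cong) auto
  also have "\<dots> = real K" using assms by simp
  finally show ?thesis unfolding T_def using assms by simp
qed

lemma T_cont: "continuous_on A (T d K l)"
  unfolding T_def by (intro continuous_intros)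

lemma umin_bound:
  assumes K: "1 \<le> K" and l: "l < 1" and v: "1 < v" "v < T d K l v"
  shows "1 \<le> u_min d K l \<and> u_min d K l \<le> v \<and> T d K l (u_min d K l) = u_min d K l
     \<and> (\<exists>u > 1. T d K l u = u)"
proof -
  let ?f = "\<lambda>u. T d K l u - u"
  have c: "continuous_on A ?f" for A by (intro continuous_intros T_cont)
  have "\<exists>x\<ge>1. x \<le> v \<and> ?f x = 0"
    by (rule IVT') (use T_at1[OF K] l v c in auto)
  then obtain x where x: "1 \<le> x" "x \<le> v" "T d K l x = x" by auto
  have "x \<noteq> 1" using x T_at1[OF K, of d l] l by auto
  with x have x1: "x > 1" by auto
  define S where "S = {u. 1 \<le> u \<and> T d K l u = u}"
  have cl: "closed S"
  proof -
    have "S = {u. 1 \<le> u} \<inter> {u. T d K l u = u}" unfolding S_def by auto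
    moreover have "closed {u. T d K l u = u}"
      by (intro closed_Collect_eq) (auto intro: T_cont continuous_intros)
    moreover have "closed {u::real. 1 \<le> u}" by (simp add: closed_Collect_le)
    ultimately show ?thesis by (simp add: closed_Int)
  qed
  have ne: "S \<noteq> {}" and bb: "bdd_below S" and xS: "x \<in> S"
    using x unfolding S_def bdd_below_def by auto
  have IS: "Inf S \<in> S" by (rule closed_contains_Inf[OF ne bb cl])
  have "u_min d K l = Inf S"
    unfolding u_min_def
  proof (rule Least_equality)
    show "1 \<le> Inf S \<and> T d K l (Inf S) = Inf S" using IS unfolding S_def by auto
    show "\<And>y. 1 \<le> y \<and> T d K l y = y \<Longrightarrow> Inf S \<le> y"
      by (rule cInf_lower[OF _ bb]) (auto simp: S_def)
  qed
  moreover have "Inf S \<le> x" by (rule cInf_lower[OF xS bb])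
  ultimately show ?thesis using IS x x1 unfolding S_def by auto
qed

theorem lemma3p4:
  fixes d K :: nat
  assumes "1 \<le> K" and "K < d"
  shows "\<exists>lbar < 1.
     (\<forall>l. lbar < l \<and> l < 1 \<longrightarrow> (\<exists>u > 1. T d K l u = u)) \<and>
     ((u_min d K \<longlongrightarrow> 1) (at_left 1)) \<and>
     (\<exists>g :: real \<Rightarrow> real.
        (\<forall>\<^sub>F e in at_right 0. ((\<lambda>l. h d K l e) \<longlongrightarrow> g e) (at_left 1)) \<and>
        (g \<longlongrightarrow> real d / real K) (at_right 0))"
proof -
  let ?T1 = "T d K 1"
  have Kpos: "real K > 0" using assms by simp
  have D1: "real d / real K > 1" using assms by (simp add: field_simps)
  have der: "DERIV (\<lambda>u. ?T1 u - u) 1 :> real d / real K - 1"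
    by (intro derivative_intros T_deriv1[OF assms])
  obtain \<delta> where \<delta>: "\<delta> > 0" "\<And>h. h > 0 \<Longrightarrow> h < \<delta> \<Longrightarrow> ?T1 1 - 1 < ?T1 (1 + h) - (1 + h)"
    using DERIV_pos_inc_right[OF der] D1 by auto
  have pos: "?T1 (1 + h) > 1 + h" if "h > 0" "h < \<delta>" for h
    using \<delta>(2)[OF that] T_at1[OF assms(1), of d 1] by simp
  have key: "\<forall>\<^sub>F l in at_left 1. T d K l u0 > u0" if "?T1 u0 > u0" "u0 > 1" for u0
  proof -
    have "u0 / ?T1 u0 < 1" using that by (simp add: field_simps)
    moreover have "T d K l u0 > u0" if "u0 / ?T1 u0 < l" for l
    proof -
      have "u0 < l * ?T1 u0" using that \<open>?T1 u0 > u0\<close> \<open>u0 > 1\<close>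
        by (simp add: field_simps)
      then show ?thesis by (subst T_scale) simp
    qed
    ultimately show ?thesis unfolding eventually_at_left_field by (intro exI[of _ "u0 / ?T1 u0"]) auto
  qed
  define u0 where "u0 = 1 + \<delta> / 2"
  have u0: "?T1 u0 > u0" "u0 > 1" using pos[of "\<delta>/2"] \<delta> unfolding u0_def by auto
  define lbar where "lbar = u0 / ?T1 u0"
  have lbar: "lbar < 1" using u0 unfolding lbar_def by (simp add: field_simps)
  have P1: "\<exists>u > 1. T d K l u = u" if "lbar < l" "l < 1" for l
  proof -
    have "u0 < l * ?T1 u0" using that u0 unfolding lbar_def by (simp add: field_simps)
    then have "T d K l u0 > u0" by (subst T_scale) simp
    then show ?thesis using umin_bound[OF assms(1) \<open>l < 1\<close> u0(2)] by blast
  qed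
  have P2: "(u_min d K \<longlongrightarrow> 1) (at_left 1)"
  proof (rule tendstoI)
    fix e :: real assume e: "e > 0"
    define u1 where "u1 = 1 + min \<delta> e / 2"
    have u1: "?T1 u1 > u1" "u1 > 1" "u1 < 1 + e" using pos[of "min \<delta> e/2"] \<delta> e unfolding u1_def by auto
    show "\<forall>\<^sub>F l in at_left 1. dist (u_min d K l) 1 < e"
      using key[OF u1(1,2)] eventually_at_left_real[of 0 1, OF zero_less_one]
    proof (eventually_elim)
      case (elim l)
      then show ?case using umin_bound[where l=l and v=u1 and d=d, OF assms(1)] u1 by (auto simp: dist_real_def)
    qed
  qed
  define g where "g = (\<lambda>e. (1 - ?T1 (1 - e)) / e)"
  have P3: "((\<lambda>l. h d K l e) \<longlongrightarrow> g e) (at_left 1)" if "e > 0" for e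
  proof -
    have ic: "isCont ?T1 x" for x
      using T_cont[of UNIV d K 1] by (simp add: continuous_on_eq_continuous_at)
    have c1: "((\<lambda>l. ?T1 (u_min d K l - e)) \<longlongrightarrow> ?T1 (1 - e)) (at_left 1)"
      by (rule isCont_tendsto_compose[OF ic tendsto_diff[OF P2 tendsto_const]])
    have "((\<lambda>l. (u_min d K l - l * ?T1 (u_min d K l - e)) / e) \<longlongrightarrow> (1 - 1 * ?T1 (1 - e)) / e) (at_left 1)"
      using that by (intro tendsto_intros P2 c1) auto
    then show ?thesis unfolding h_def g_def by (subst T_scale) simp
  qed
  have P4: "(g \<longlongrightarrow> real d / real K) (at_right 0)"
  proof -
    have "DERIV (\<lambda>x. ?T1 (- x)) (-1) :> - (real d / real K)"
      using DERIV_mirror[where f="?T1" and x="-1" and y="real d / real K"] T_deriv1[OF assms] by simp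
    then have "((\<lambda>h. (?T1 (- (-1 + h)) - ?T1 (- (-1))) / h) \<longlongrightarrow> - (real d / real K)) (at 0)"
      by (simp add: DERIV_def)
    then have "((\<lambda>h. - ((?T1 (- (-1 + h)) - ?T1 (- (-1))) / h)) \<longlongrightarrow> real d / real K) (at 0)"
      using tendsto_minus by fastforce
    then have "((\<lambda>h. - ((?T1 (- (-1 + h)) - ?T1 (- (-1))) / h)) \<longlongrightarrow> real d / real K) (at_right 0)"
      by (rule tendsto_mono[OF at_within_le_at])
    moreover have "(\<lambda>h. - ((?T1 (- (-1 + h)) - ?T1 (- (-1))) / h)) = g"
      unfolding g_def using T_at1[OF assms(1), of d 1] by (intro ext) (simp add: minus_divide_left)
    ultimately show ?thesis by simp
  qed
  have P3': "\<forall>\<^sub>F e in at_right 0. ((\<lambda>l. h d K l e) \<longlongrightarrow> g e) (at_left 1)"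
    using eventually_at_right_real[OF zero_less_one] by eventually_elim (auto intro: P3)
  show ?thesis
    using lbar P1 P2 P3' P4 by (intro exI[of _ lbar] conjI exI[of _ g]) auto
qed

end
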